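(* There exists a $\mathbb Q^\pi$-algebra automorphism $u\mapsto u^\dagger$ of $\mathbf U$ which restricts to the dagger involution on the scalars $\mathbb Q(v)^\pi$ (so $v^\dagger=\pi v$, $\pi^\dagger=\pi$) and satisfies, for all $i\in I$ and $\nu\in Y$, $$E_i^\dagger=\pi_i\tilde J_iE_i,\qquad F_i^\dagger=F_i,\qquad K_\nu^\dagger=J_\nu K_\nu,\qquad J_\nu^\dagger=J_\nu .$$
   Context: Setup. $I$ is a finite set with a partition $I=I_{\bar 0}\sqcup I_{\bar 1}$, $I_{\bar 1}\neq\emptyset$; $p(i)=0$ for $i\in I_{\bar0}$ and $p(i)=1$ for $i\in I_{\bar1}$. There is a symmetric $\mathbb Z$-bilinear form $\nu\cdot\nu'$ on $\mathbb Z[I]$ with $d_i:=\frac{i\cdot i}{2}\in\mathbb Z_{>0}$, $a_{ij}:=\frac{2\,i\cdot j}{i\cdot i}\in\mathbb Z_{\le 0}$ for $i\neq j$, $a_{ij}\in2\mathbb Z$ whenever $i\in I_{\bar1}$, and $d_i\equiv p(i)\pmod 2$ (hence $i\cdot j\in2\mathbb Z$ for all $i,j$). A root datum is fixed: free abelian groups $X,Y$ of finite rank with a perfect pairing $\langle\cdot,\cdot\rangle:Y\times X\to\mathbb Z$, a map $I\to Y$, $i\mapsto i$, with linearly independent image, and a map $I\to X$, $i\mapsto i'$, with $\langle i,j'\rangle=\frac{2\,i\cdot j}{i\cdot i}$. For $\nu=\sum\nu_i i\in\mathbb Z[I]$ put $p(\nu)=\sum\nu_ip(i)\in\mathbb Z/2$,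 $\mathrm{ht}\,\nu=\sum\nu_i$, $\tilde\nu=\sum d_i\nu_i i$, regard $\nu$ as an element of $Y$ via $i\mapsto i$, and put $\nu'=\sum\nu_ii'\in X$. $X^+=\{\lambda\in X:\langle i,\lambda\rangle\ge0\ \forall i\}$; $b_{ij}=1-a_{ij}$. Parameters: $\pi$ is an indeterminate with $\pi^2=1$; $\mathbb Z^\pi=\mathbb Z[\pi]/(\pi^2-1)$, $\mathbb Q^\pi=\mathbb Q[\pi]/(\pi^2-1)$, $\mathbb Q(v)^\pi=\mathbb Q(v)[\pi]/(\pi^2-1)$, $\mathbb A=\mathbb Z^\pi[v,v^{-1}]$. $v_i=v^{d_i}$, $\pi_i=\pi^{d_i}$, $v_\nu=\prod v_i^{\nu_i}$, $\pi_\nu=\prod\pi_i^{\nu_i}$. $[n]_{v,\pi}=\frac{(\pi v)^n-v^{-n}}{\pi v-v^{-1}}$, $[n]^!_{v,\pi}=\prod_{l=1}^n[l]_{v,\pi}$, $\begin{bmatrix}n\\k\end{bmatrix}_{v,\pi}=\prod_{l=n-k+1}^{n}((\pi v)^l-v^{-l})\big/\prod_{m=1}^k((\pi v)^m-v^{-m})$. The bar involution of $\mathbb Q(v)^\pi$ is the $\mathbb Q^\pi$-algebra automorphism $f(v,\pi)\mapsto f(\pi v^{-1},\pi)$. The quantum covering group $\mathbf U$ is the $\mathbb Q(v)^\pi$-algebra with generators $E_i,F_i$ ($i\in I$), $K_\mu,J_\mu$ ($\mu\in Y$) and relations: $K_\mu K_\nu=K_{\mu+\nu}$, $J_\mu J_\nu=J_{\mu+\nu}$,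 $K_0=J_0=J_\nu^2=1$, $J_\mu K_\nu=K_\nu J_\mu$; $J_\mu E_i=\pi^{\langle\mu,i'\rangle}E_iJ_\mu$, $J_\mu F_i=\pi^{-\langle\mu,i'\rangle}F_iJ_\mu$, $K_\mu E_i=v^{\langle\mu,i'\rangle}E_iK_\mu$, $K_\mu F_i=v^{-\langle\mu,i'\rangle}F_iK_\mu$; $E_iF_j-\pi^{p(i)p(j)}F_jE_i=\delta_{ij}\frac{\tilde J_i\tilde K_i-\tilde K_{-i}}{\pi_iv_i-v_i^{-1}}$; and for $i\neq j$, $\sum_{k=0}^{b_{ij}}(-1)^k\pi^{\binom k2p(i)+kp(i)p(j)}\begin{bmatrix}b_{ij}\\k\end{bmatrix}_{v_i,\pi_i}X_i^{b_{ij}-k}X_jX_i^k=0$ for $X=E$ and for $X=F$. Here $\tilde J_\nu=J_{\tilde\nu}$, $\tilde K_\nu=K_{\tilde\nu}$. The dagger involution of $\mathbb Q(v)^\pi$ is the $\mathbb Q^\pi$-algebra automorphism $f(v,\pi)\mapsto f(\pi v,\pi)$. *)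

theory Defs
  imports Main "HOL-Library.Poly_Mapping" "HOL-Library.Function_Algebras" "HOL-Computational_Algebra.Polynomial"
          "HOL-Computational_Algebra.Normalized_Fraction"
          "HOL-Computational_Algebra.Polynomial_Factorial" "HOL-Computational_Algebra.Field_as_Ring"
begin

section \<open>Scalars: Q(v), and Q(v)^pi = Q(v)[pi]/(pi^2-1)\<close>

type_synonym qv = "rat poly fract"   (* the field Q(v) *)

definition vQ :: qv where "vQ = to_fract [:0, 1:]"

definition negv :: "qv \<Rightarrow> qv" where
  "negv x = (case quot_of_fract x of (p, q) \<Rightarrow>
              to_fract (p \<circ>\<^sub>p [:0, -1:]) / to_fract (q \<circ>\<^sub>p [:0, -1:]))"

definition evp :: "qv \<Rightarrow> qv" where "evp f = (f + negv f) / 2"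
definition odp :: "qv \<Rightarrow> qv" where "odp f = (f - negv f) / 2"

(* QP a b represents a + b*pi *)
datatype qvpi = QP (qa: qv) (qb: qv)

instantiation qvpi :: comm_ring_1
begin
definition "0 = QP 0 0"
definition "1 = QP 1 0"
definition "x + y = QP (qa x + qa y) (qb x + qb y)"
definition "x - y = QP (qa x - qa y) (qb x - qb y)"
definition "- x = QP (- qa x) (- qb x)"
definition "x * y = QP (qa x * qa y + qb x * qb y) (qa x * qb y + qb x * qa y)"
instance
  by standard (auto simp: zero_qvpi_def one_qvpi_def plus_qvpi_def minus_qvpi_def
      uminus_qvpi_def times_qvpi_def algebra_simps intro: qvpi.expand)
end

definition piQ :: qvpi where "piQ = QP 0 1"

definition vpw :: "int \<Rightarrow> qvpi" where "vpw n = QP (vQ powi n) 0"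
definition ppw :: "int \<Rightarrow> qvpi" where "ppw n = (if even n then 1 else piQ)"

(* inverse of an invertible element of Q(v)^pi: (a+b pi)^-1 = (a - b pi)/(a^2-b^2) *)
definition qinv :: "qvpi \<Rightarrow> qvpi" where
  "qinv x = QP (qa x / (qa x ^ 2 - qb x ^ 2)) (- qb x / (qa x ^ 2 - qb x ^ 2))"

(* dagger involution f(v,pi) -> f(pi v, pi).  Writing a = a_ev + a_od (even/odd in v),
   a(pi v) = a_ev + pi a_od; hence (a + b pi)^dagger = (a_ev + b_od) + (a_od + b_ev) pi *)
definition dag :: "qvpi \<Rightarrow> qvpi" where
  "dag x = QP (evp (qa x) + odp (qb x)) (odp (qa x) + evp (qb x))"

(* quantum binomial [n k]_{v_i,pi_i} with v_i = v^d, pi_i = pi^d *)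
definition qbinom :: "nat \<Rightarrow> nat \<Rightarrow> int \<Rightarrow> qvpi" where
  "qbinom n k d =
     (\<Prod>l\<in>{n - k + 1..n}. (ppw d * vpw d) ^ l - vpw (- d * int l)) *
     qinv (\<Prod>m\<in>{1..k}. (ppw d * vpw d) ^ m - vpw (- d * int m))"

datatype 'g word = Wd (unwd: "'g list")

instantiation word :: (type) monoid_add
begin
definition "0 = Wd []"
definition "x + y = Wd (unwd x @ unwd y)"
instance by standard (auto simp: zero_word_def plus_word_def)
end

(* Y = X = Z^'r with the standard perfect pairing *)
datatype ('i, 'r) gen = GE 'i | GF 'i | GK "'r \<Rightarrow> int" | GJ "'r \<Rightarrow> int"

type_synonym ('i, 'r) falg = "('i, 'r) gen word \<Rightarrow>\<^sub>0 qvpi"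

definition gen :: "('i, 'r) gen \<Rightarrow> ('i, 'r) falg" where
  "gen g = Poly_Mapping.single (Wd [g]) 1"

definition sc :: "qvpi \<Rightarrow> ('i, 'r) falg \<Rightarrow> ('i, 'r) falg" where
  "sc c x = Poly_Mapping.single 0 c * x"

abbreviation "Eg i \<equiv> gen (GE i)"
abbreviation "Fg i \<equiv> gen (GF i)"
abbreviation "Kg \<mu> \<equiv> gen (GK \<mu>)"
abbreviation "Jg \<mu> \<equiv> gen (GJ \<mu>)"

definition pairing :: "('r::finite \<Rightarrow> int) \<Rightarrow> ('r \<Rightarrow> int) \<Rightarrow> int" where
  "pairing y x = (\<Sum>r\<in>UNIV. y r * x r)"

inductive_set ideal_gen :: "'a::ring set \<Rightarrow> 'a set" for S where
  base: "x \<in> S \<Longrightarrow> x \<in> ideal_gen S"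
| zero: "0 \<in> ideal_gen S"
| add: "x \<in> ideal_gen S \<Longrightarrow> y \<in> ideal_gen S \<Longrightarrow> x + y \<in> ideal_gen S"
| mult: "x \<in> ideal_gen S \<Longrightarrow> a * x * b \<in> ideal_gen S"

definition dI :: "('i \<Rightarrow> 'i \<Rightarrow> int) \<Rightarrow> 'i \<Rightarrow> int" where "dI dot i = dot i i div 2"
definition aI :: "('i \<Rightarrow> 'i \<Rightarrow> int) \<Rightarrow> 'i \<Rightarrow> 'i \<Rightarrow> int" where
  "aI dot i j = (2 * dot i j) div dot i i"
definition pI :: "('i \<Rightarrow> bool) \<Rightarrow> 'i \<Rightarrow> int" where "pI par i = (if par i then 1 else 0)"

definition super_cartan :: "('i::finite \<Rightarrow> 'i \<Rightarrow> int) \<Rightarrow> ('i \<Rightarrow> bool) \<Rightarrow> bool" where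
  "super_cartan dot par \<longleftrightarrow>
     (\<forall>i j. dot i j = dot j i) \<and>
     (\<forall>i. even (dot i i) \<and> dot i i > 0) \<and>
     (\<forall>i j. i \<noteq> j \<longrightarrow> dot i i dvd 2 * dot i j \<and> aI dot i j \<le> 0) \<and>
     (\<forall>i j. i \<noteq> j \<longrightarrow> par i \<longrightarrow> even (aI dot i j)) \<and>
     (\<forall>i. odd (dI dot i) \<longleftrightarrow> par i) \<and>
     (\<exists>i. par i)"

definition root_datum :: "('i::finite \<Rightarrow> 'i \<Rightarrow> int) \<Rightarrow> ('i \<Rightarrow> 'r::finite \<Rightarrow> int) \<Rightarrow>
    ('i \<Rightarrow> 'r \<Rightarrow> int) \<Rightarrow> bool" where
  "root_datum dot yI xI \<longleftrightarrow>
     (\<forall>i j. pairing (yI i) (xI j) = aI dot i j) \<and>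
     (\<forall>c :: 'i \<Rightarrow> int. (\<lambda>r. \<Sum>i\<in>UNIV. c i * yI i r) = 0 \<longrightarrow> c = 0)"

definition ytil :: "('i \<Rightarrow> 'i \<Rightarrow> int) \<Rightarrow> ('i \<Rightarrow> 'r \<Rightarrow> int) \<Rightarrow> 'i \<Rightarrow> 'r \<Rightarrow> int" where
  "ytil dot yI i = (\<lambda>r. dI dot i * yI i r)"

definition serre :: "('i \<Rightarrow> 'i \<Rightarrow> int) \<Rightarrow> ('i \<Rightarrow> bool) \<Rightarrow> ('i \<Rightarrow> ('i, 'r) falg)
     \<Rightarrow> 'i \<Rightarrow> 'i \<Rightarrow> ('i, 'r) falg" where
  "serre dot par X i j = (let b = nat (1 - aI dot i j) in
     (\<Sum>k\<in>{0..b}. sc ((-1) ^ k * ppw (int (k choose 2) * pI par i + int k * pI par i * pI par j)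
                        * qbinom b k (dI dot i))
                   (X i ^ (b - k) * X j * X i ^ k)))"

definition qcg_rels :: "('i::finite \<Rightarrow> 'i \<Rightarrow> int) \<Rightarrow> ('i \<Rightarrow> bool) \<Rightarrow> ('i \<Rightarrow> 'r::finite \<Rightarrow> int) \<Rightarrow>
    ('i \<Rightarrow> 'r \<Rightarrow> int) \<Rightarrow> ('i, 'r) falg set" where
  "qcg_rels dot par yI xI =
     {Kg \<mu> * Kg \<nu> - Kg (\<mu> + \<nu>) | \<mu> \<nu>. True} \<union>
     {Jg \<mu> * Jg \<nu> - Jg (\<mu> + \<nu>) | \<mu> \<nu>. True} \<union>
     {Kg 0 - 1, Jg 0 - 1} \<union>
     {Jg \<nu> * Jg \<nu> - 1 | \<nu>. True} \<union>
     {Jg \<mu> * Kg \<nu> - Kg \<nu> * Jg \<mu> | \<mu> \<nu>. True} \<union>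
     {Jg \<mu> * Eg i - sc (ppw (pairing \<mu> (xI i))) (Eg i * Jg \<mu>) | \<mu> i. True} \<union>
     {Jg \<mu> * Fg i - sc (ppw (- pairing \<mu> (xI i))) (Fg i * Jg \<mu>) | \<mu> i. True} \<union>
     {Kg \<mu> * Eg i - sc (vpw (pairing \<mu> (xI i))) (Eg i * Kg \<mu>) | \<mu> i. True} \<union>
     {Kg \<mu> * Fg i - sc (vpw (- pairing \<mu> (xI i))) (Fg i * Kg \<mu>) | \<mu> i. True} \<union>
     {Eg i * Fg j - sc (ppw (pI par i * pI par j)) (Fg j * Eg i)
        - (if i = j then sc (qinv (ppw (dI dot i) * vpw (dI dot i) - vpw (- dI dot i)))
                           (Jg (ytil dot yI i) * Kg (ytil dot yI i) - Kg (- ytil dot yI i))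
           else 0) | i j. True} \<union>
     {serre dot par Eg i j | i j. i \<noteq> j} \<union>
     {serre dot par Fg i j | i j. i \<noteq> j}"

(* U = falg / qcg_ideal; elements of U are represented by elements of falg *)
definition qcg_ideal where "qcg_ideal dot par yI xI = ideal_gen (qcg_rels dot par yI xI)"

end

theory Submission
  imports Defs
begin


definition Cp :: "rat poly \<Rightarrow> rat poly" where "Cp p = p \<circ>\<^sub>p [:0, -1:]"

lemma Cp_Cp[simp]: "Cp (Cp p) = p"
proof -
  have "[:0, -1:] \<circ>\<^sub>p [:0, -1::rat:] = [:0, 1:]"
    by (simp add: pcompose_pCons)
  then show ?thesis unfolding Cp_def by (metis pcompose_assoc pcompose_idR)
qed

lemma Cp_add[simp]: "Cp (p + q) = Cp p + Cp q" by (simp add: Cp_def pcompose_add)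
lemma Cp_mult[simp]: "Cp (p * q) = Cp p * Cp q" by (simp add: Cp_def pcompose_mult)
lemma Cp_uminus[simp]: "Cp (- p) = - Cp p" by (simp add: Cp_def pcompose_uminus)
lemma Cp_0[simp]: "Cp 0 = 0" by (simp add: Cp_def)
lemma Cp_1[simp]: "Cp 1 = 1" by (simp add: Cp_def pcompose_1)
lemma Cp_eq0[simp]: "Cp p = 0 \<longleftrightarrow> p = 0"
  by (metis Cp_0 Cp_Cp)

lemma negv_Fract: assumes "q \<noteq> 0" shows "negv (Fract p q) = Fract (Cp p) (Cp q)"
proof -
  obtain a b where ab: "quot_of_fract (Fract p q) = (a, b)" by (cases "quot_of_fract (Fract p q)")
  have b0: "b \<noteq> 0" using snd_quot_of_fract_nonzero[of "Fract p q"] ab by simp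
  have "Fract a b = Fract p q" using Fract_quot_of_fract[of "Fract p q"] ab by simp
  hence "a * q = p * b" using eq_fract(1)[OF b0 assms] by simp
  hence "Cp a * Cp q = Cp p * Cp b" by (metis Cp_mult)
  hence "Fract (Cp a) (Cp b) = Fract (Cp p) (Cp q)" using b0 assms by (subst eq_fract(1)) simp_all
  moreover have "negv (Fract p q) = Fract (Cp a) (Cp b)"
    unfolding negv_def ab by (simp add: Fract_conv_to_fract Cp_def)
  ultimately show ?thesis by simp
qed

lemma negv_add[simp]: "negv (x + y) = negv x + negv y"
  by (induct x rule: Fract_induct, induct y rule: Fract_induct) (simp add: negv_Fract)
lemma negv_mult[simp]: "negv (x * y) = negv x * negv y"
  by (induct x rule: Fract_induct, induct y rule: Fract_induct) (simp add: negv_Fract)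
lemma negv_uminus[simp]: "negv (- x) = - negv x"
  by (induct x rule: Fract_induct) (simp add: negv_Fract)
lemma negv_diff[simp]: "negv (x - y) = negv x - negv y"
  by (metis diff_conv_add_uminus negv_add negv_uminus)
lemma negv_0[simp]: "negv 0 = 0"
  by (metis add_cancel_right_right negv_add)
lemma negv_1[simp]: "negv 1 = 1"
proof -
  have "(1::qv) = Fract 1 1" by (simp add: One_fract_def)
  moreover have "negv (Fract 1 1) = Fract (Cp 1) (Cp 1)" by (rule negv_Fract) simp
  ultimately show ?thesis by simp
qed
lemma negv_negv[simp]: "negv (negv x) = x"
  by (induct x rule: Fract_induct) (simp add: negv_Fract)
lemma negv_inverse[simp]: "negv (inverse x) = inverse (negv x)"
proof (induct x rule: Fract_induct)
  case (Fract a b)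
  show ?case
  proof (cases "a = 0")
    case True
    then show ?thesis using Fract by (simp add: negv_Fract eq_fract)
  qed (use Fract in \<open>simp add: negv_Fract\<close>)
qed
lemma negv_divide[simp]: "negv (x / y) = negv x / negv y"
  by (simp add: divide_inverse)
lemma negv_numeral[simp]: "negv (numeral n) = numeral n"
  by (induct n) (simp_all only: numeral.simps negv_add negv_1)
lemma negv_vQ[simp]: "negv vQ = - vQ"
proof -
  have "vQ = Fract [:0,1:] 1" by (simp add: vQ_def Fract_conv_to_fract)
  moreover have "Cp [:0,1:] = - [:0,1:]" by (simp add: Cp_def pcompose_pCons)
  moreover have "negv (Fract [:0,1:] 1) = Fract (Cp [:0,1:]) (Cp 1)" by (rule negv_Fract) simp
  moreover have "Fract (- [:0,1:]) 1 = - Fract [:0,1::rat:] 1" by simp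
  ultimately show ?thesis by (metis Cp_1)
qed
lemma negv_power[simp]: "negv (x ^ n) = negv x ^ n"
  by (induct n) auto
lemma negv_powi[simp]: "negv (x powi n) = negv x powi n"
  by (simp add: power_int_def)


lemma ev_od: "evp a + odp a = a" by (simp add: evp_def odp_def field_simps)
lemma negv_evp[simp]: "negv (evp a) = evp a" by (simp add: evp_def add.commute)
lemma negv_odp[simp]: "negv (odp a) = - odp a" by (simp add: odp_def field_simps)
lemma evp_add[simp]: "evp (a + b) = evp a + evp b" by (simp add: evp_def field_simps)
lemma odp_add[simp]: "odp (a + b) = odp a + odp b" by (simp add: odp_def field_simps)
lemma evp_uminus[simp]: "evp (- a) = - evp a" by (simp add: evp_def field_simps)
lemma odp_uminus[simp]: "odp (- a) = - odp a" by (simp add: odp_def field_simps)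
lemma evp_diff[simp]: "evp (a - b) = evp a - evp b" by (simp add: evp_def field_simps)
lemma odp_diff[simp]: "odp (a - b) = odp a - odp b" by (simp add: odp_def field_simps)
lemma od_ev: "odp a + evp a = a" by (simp add: evp_def odp_def field_simps)
lemma evp_mult: "evp (a * b) = evp a * evp b + odp a * odp b"
  by (simp add: evp_def odp_def field_simps)
lemma odp_mult: "odp (a * b) = evp a * odp b + odp a * evp b"
  by (simp add: evp_def odp_def field_simps)
lemma evp_0[simp]: "evp 0 = 0" by (simp add: evp_def)
lemma odp_0[simp]: "odp 0 = 0" by (simp add: odp_def)
lemma evp_1[simp]: "evp 1 = 1" by (simp add: evp_def)
lemma odp_1[simp]: "odp 1 = 0" by (simp add: odp_def)
lemma evp_evp[simp]: "evp (evp a) = evp a" by (simp add: evp_def field_simps)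
lemma odp_evp[simp]: "odp (evp a) = 0" by (simp add: evp_def odp_def field_simps)
lemma evp_odp[simp]: "evp (odp a) = 0" by (simp add: evp_def odp_def field_simps)
lemma odp_odp[simp]: "odp (odp a) = odp a" by (simp add: odp_def field_simps)

lemma qvpi_eq: "x = y \<longleftrightarrow> qa x = qa y \<and> qb x = qb y" by (cases x, cases y) auto

lemma qa_add[simp]: "qa (x + y) = qa x + qa y" and qb_add[simp]: "qb (x + y) = qb x + qb y"
  by (simp_all add: plus_qvpi_def)
lemma qa_diff[simp]: "qa (x - y) = qa x - qa y" and qb_diff[simp]: "qb (x - y) = qb x - qb y"
  by (simp_all add: minus_qvpi_def)
lemma qa_uminus[simp]: "qa (- x) = - qa x" and qb_uminus[simp]: "qb (- x) = - qb x"
  by (simp_all add: uminus_qvpi_def)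
lemma qa_mult[simp]: "qa (x * y) = qa x * qa y + qb x * qb y"
  and qb_mult[simp]: "qb (x * y) = qa x * qb y + qb x * qa y"
  by (simp_all add: times_qvpi_def)
lemma qa_0[simp]: "qa 0 = 0" and qb_0[simp]: "qb 0 = 0" by (simp_all add: zero_qvpi_def)
lemma qa_1[simp]: "qa 1 = 1" and qb_1[simp]: "qb 1 = 0" by (simp_all add: one_qvpi_def)
lemma qa_dag[simp]: "qa (dag x) = evp (qa x) + odp (qb x)"
  and qb_dag[simp]: "qb (dag x) = odp (qa x) + evp (qb x)" by (simp_all add: dag_def)

lemma dag_add[simp]: "dag (x + y) = dag x + dag y" by (simp add: qvpi_eq)
lemma dag_uminus[simp]: "dag (- x) = - dag x" by (simp add: qvpi_eq)
lemma dag_diff[simp]: "dag (x - y) = dag x - dag y" by (simp add: qvpi_eq)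
lemma dag_0[simp]: "dag 0 = 0" by (simp add: qvpi_eq)
lemma dag_1[simp]: "dag 1 = 1" by (simp add: qvpi_eq)
lemma dag_mult[simp]: "dag (x * y) = dag x * dag y"
  by (simp add: qvpi_eq evp_mult odp_mult algebra_simps)
lemma dag_dag[simp]: "dag (dag x) = x" by (simp add: qvpi_eq ev_od od_ev)
lemma dag_power[simp]: "dag (x ^ n) = dag x ^ n" by (induct n) auto
lemma dag_prod: "dag (prod f A) = prod (\<lambda>a. dag (f a)) A"
  by (induct A rule: infinite_finite_induct) auto
lemma dag_neg1[simp]: "dag (-1) = -1" by simp

lemma qa_piQ[simp]: "qa piQ = 0" and qb_piQ[simp]: "qb piQ = 1" by (simp_all add: piQ_def)
lemma dag_piQ[simp]: "dag piQ = piQ" by (simp add: qvpi_eq)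
lemma piQ_sq[simp]: "piQ * piQ = 1" by (simp add: qvpi_eq)
lemma dag_ppw[simp]: "dag (ppw n) = ppw n" by (simp add: ppw_def)
lemma ppw_sq[simp]: "ppw n * ppw n = 1" by (simp add: ppw_def)
lemma ppw_add: "ppw (a + b) = ppw a * ppw b" by (auto simp add: ppw_def)
lemma ppw_uminus[simp]: "ppw (- a) = ppw a" by (auto simp add: ppw_def)
lemma ppw_even: "even n \<Longrightarrow> ppw n = 1" by (simp add: ppw_def)
lemma ppw_power: "ppw a ^ k = ppw (a * int k)"
  by (induct k) (auto simp add: ppw_def algebra_simps)

lemma vQ_nz[simp]: "vQ \<noteq> 0" by (simp add: vQ_def)
lemma qa_vpw[simp]: "qa (vpw n) = vQ powi n" and qb_vpw[simp]: "qb (vpw n) = 0"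
  by (simp_all add: vpw_def)
lemma dag_vpw: "dag (vpw n) = ppw n * vpw n"
  by (auto simp add: qvpi_eq evp_def odp_def ppw_def power_int_minus_left)
lemma vpw_add: "vpw (a + b) = vpw a * vpw b" by (simp add: qvpi_eq power_int_add)
lemma vpw_power: "vpw a ^ k = vpw (a * int k)"
  by (induct k) (auto simp add: vpw_add algebra_simps simp del: qa_vpw qb_vpw, simp add: qvpi_eq)
lemma vpw_0[simp]: "vpw 0 = 1" by (simp add: qvpi_eq)

definition Nm :: "qvpi \<Rightarrow> qv" where "Nm x = qa x ^ 2 - qb x ^ 2"
lemma Nm_mult: "Nm (x * y) = Nm x * Nm y" by (simp add: Nm_def power2_eq_square algebra_simps)
lemma Nm_1: "Nm 1 = 1" by (simp add: Nm_def)
lemma aux_inv1: "(N::qv) \<noteq> 0 \<Longrightarrow> N = a^2 - b^2 \<Longrightarrow> a*(a/N) + b*(-b/N) = 1"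
  by (simp add: field_simps power2_eq_square)
lemma aux_inv2: "(N::qv) \<noteq> 0 \<Longrightarrow> a*(-b/N) + b*(a/N) = 0"
  by (simp add: field_simps)
lemma qinv_inv: "Nm x \<noteq> 0 \<Longrightarrow> x * qinv x = 1"
  unfolding qvpi_eq qinv_def Nm_def
  by (simp only: qa_mult qb_mult qvpi.sel qa_1 qb_1) (intro impI conjI aux_inv1 aux_inv2; simp)
lemma unit_Nm: "x * y = 1 \<Longrightarrow> Nm x \<noteq> 0"
  by (metis Nm_1 Nm_mult mult_zero_left one_neq_zero)
lemma qinv_eq: assumes "x * y = 1" shows "qinv x = y"
proof -
  have "x * qinv x = 1" using qinv_inv unit_Nm assms by blast
  then have "y * (x * qinv x) = y" by simp
  then show ?thesis using assms by (simp add: mult.assoc[symmetric] mult.commute)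
qed
lemma dag_qinv: assumes "x * y = 1" shows "dag (qinv x) = qinv (dag x)"
proof -
  have "dag x * dag y = 1" using assms by (metis dag_1 dag_mult)
  then show ?thesis using qinv_eq assms by simp
qed


definition Nf :: "int \<Rightarrow> nat \<Rightarrow> qvpi" where
  "Nf d l = (ppw d * vpw d) ^ l - vpw (- d * int l)"

lemma Nf_alt: "Nf d l = ppw (d * int l) * vpw (d * int l) - vpw (- (d * int l))"
  by (simp add: Nf_def power_mult_distrib ppw_power vpw_power)

lemma dag_Nf: "dag (Nf d l) = ppw d ^ l * Nf d l"
  unfolding Nf_alt ppw_power
  by (simp add: dag_vpw algebra_simps)

lemma to_fract_power: "to_fract (x ^ n) = to_fract x ^ n" by (induct n) simp_all
lemma vQ_pow_ne1: "n > 0 \<Longrightarrow> vQ ^ n \<noteq> 1"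
proof
  assume n: "n > 0" and "vQ ^ n = 1"
  then have "to_fract ([:0,1::rat:] ^ n) = to_fract 1" by (simp add: vQ_def to_fract_power)
  then have "[:0,1::rat:] ^ n = 1" by (simp only: to_fract_eq_iff)
  then have "degree ([:0,1::rat:] ^ n) = 0" by simp
  moreover have "degree ([:0,1::rat:] ^ n) = n" by (simp add: degree_power_eq)
  ultimately show False using n by simp
qed

lemma Nm_Nf: assumes "d > 0" "l > 0" shows "Nm (Nf d l) \<noteq> 0"
proof -
  define e where "e = d * int l"
  have e: "e > 0" using assms by (simp add: e_def)
  define w where "w = vQ ^ nat e"
  have w1: "vQ powi e = w" using e by (simp add: w_def power_int_def)
  have w2: "vQ powi (- e) = inverse w" using w1 by (simp add: power_int_minus)
  have wnz: "w \<noteq> 0" by (simp add: w_def)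
  have w2ne: "w * w \<noteq> 1" and w4ne: "(w * w) * (w * w) \<noteq> 1"
    using vQ_pow_ne1[of "nat e + nat e"] vQ_pow_ne1[of "(nat e + nat e) + (nat e + nat e)"] e
    by (simp_all add: w_def power_add)
  show ?thesis
  proof (cases "even e")
    case True
    then have "Nm (Nf d l) = (w - inverse w) ^ 2"
      by (simp add: Nf_alt e_def[symmetric] ppw_def Nm_def w1 w2)
    moreover have "w \<noteq> inverse w"
    proof
      assume "w = inverse w"
      then have "w * w = 1" using wnz by (metis right_inverse)
      then show False using w2ne by simp
    qed
    ultimately show ?thesis by simp
  next
    case False
    then have "Nm (Nf d l) = inverse w ^ 2 - w ^ 2"
      by (simp add: Nf_alt e_def[symmetric] ppw_def Nm_def w1 w2)
    moreover have "inverse w ^ 2 \<noteq> w ^ 2"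
    proof
      assume "inverse w ^ 2 = w ^ 2"
      then have "inverse w ^ 2 * w ^ 2 = w ^ 2 * w ^ 2" by simp
      then have "1 = (w * w) * (w * w)" using wnz
        by (simp add: power2_eq_square field_simps)
      then show False using w4ne by simp
    qed
    ultimately show ?thesis by simp
  qed
qed

lemma Nf_unit: "d > 0 \<Longrightarrow> l > 0 \<Longrightarrow> Nf d l * qinv (Nf d l) = 1"
  using Nm_Nf qinv_inv by blast

lemma dag_prod_Nf: "finite A \<Longrightarrow> dag (\<Prod>l\<in>A. Nf d l) = ppw d ^ (\<Sum>l\<in>A. l) * (\<Prod>l\<in>A. Nf d l)"
  by (induct A rule: finite_induct) (simp_all add: dag_Nf power_add algebra_simps)

lemma prod_Nf_unit: "finite A \<Longrightarrow> d > 0 \<Longrightarrow> 0 \<notin> A \<Longrightarrow> \<exists>y. (\<Prod>l\<in>A. Nf d l) * y = 1"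
proof (induct A rule: finite_induct)
  case empty then show ?case by auto
next
  case (insert a A)
  then obtain y where y: "(\<Prod>l\<in>A. Nf d l) * y = 1" by auto
  have "Nf d a * qinv (Nf d a) = 1" using insert Nf_unit by auto
  then have "(\<Prod>l\<in>insert a A. Nf d l) * (qinv (Nf d a) * y) = 1"
    using insert y by (simp add: algebra_simps) (metis mult.assoc mult_1)
  then show ?case by blast
qed

lemma sum_shift: fixes k n :: nat shows "k \<le> n \<Longrightarrow> (\<Sum>l\<in>{n-k+1..n}. l) + (\<Sum>m\<in>{1..k}. m) = k * (n + 1)"
proof (induct k)
  case 0 then show ?case by simp
next
  case (Suc k)
  have "{n - Suc k + 1..n} = insert (n - k) {n-k+1..n}" using Suc by auto
  then have "(\<Sum>l\<in>{n - Suc k + 1..n}. l) = (n - k) + (\<Sum>l\<in>{n-k+1..n}. l)" by simp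
  then show ?case using Suc by simp
qed

lemma ppw_pow_sq: "ppw d ^ s * ppw d ^ s = 1"
  by (metis power_mult_distrib ppw_sq power_one)

lemma dag_qbinom: assumes "d > 0" "k \<le> n" shows "dag (qbinom n k d) = ppw d ^ (k * (n + 1)) * qbinom n k d"
proof -
  define P1 where "P1 = (\<Prod>l\<in>{n - k + 1..n}. Nf d l)"
  define P2 where "P2 = (\<Prod>l\<in>{1..k}. Nf d l)"
  define s1 where "s1 = (\<Sum>l\<in>{n-k+1..n}. l)"
  define s2 where "s2 = (\<Sum>m\<in>{1..k}. m)"
  have qb: "qbinom n k d = P1 * qinv P2" by (simp add: qbinom_def P1_def P2_def Nf_def)
  obtain y where y: "P2 * y = 1" using prod_Nf_unit[of "{1..k}" d] assms by (auto simp: P2_def)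
  have "P2 * qinv P2 = 1" using qinv_eq[OF y] y by simp
  have d1: "dag P1 = ppw d ^ s1 * P1" by (simp add: P1_def s1_def dag_prod_Nf)
  have d2: "dag P2 = ppw d ^ s2 * P2" by (simp add: P2_def s2_def dag_prod_Nf)
  have "dag (qinv P2) = qinv (ppw d ^ s2 * P2)" using dag_qinv[OF y] d2 by simp
  also have "\<dots> = ppw d ^ s2 * qinv P2"
  proof (rule qinv_eq)
    show "ppw d ^ s2 * P2 * (ppw d ^ s2 * qinv P2) = 1"
      using \<open>P2 * qinv P2 = 1\<close> ppw_pow_sq[of d s2] by (metis mult.commute mult.left_commute mult_1)
  qed
  finally have "dag (qbinom n k d) = ppw d ^ (s1 + s2) * qbinom n k d"
    by (simp add: qb d1 power_add algebra_simps)
  moreover have "s1 + s2 = k * (n + 1)" using sum_shift[OF assms(2)] by (simp add: s1_def s2_def)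
  ultimately show ?thesis by simp
qed

lemma dag_qbinom_fixed: assumes "d > 0" "k \<le> n" "even d \<or> odd n"
  shows "dag (qbinom n k d) = qbinom n k d"
proof -
  have "ppw d ^ (k * (n + 1)) = 1"
    using assms(3) by (auto simp: ppw_power ppw_even)
  then show ?thesis using dag_qbinom[OF assms(1,2)] by simp
qed


type_synonym 'g fa = "'g word \<Rightarrow>\<^sub>0 qvpi"

lemma update_as_add: "Poly_Mapping.lookup f a = 0 \<Longrightarrow> Poly_Mapping.update a b f = f + Poly_Mapping.single a b"
  by (rule poly_mapping_eqI) (auto simp: lookup_update lookup_add lookup_single when_def)

lemma pm_induct:
  assumes "P 0" "\<And>w c. P (Poly_Mapping.single w c)" "\<And>x y. P x \<Longrightarrow> P y \<Longrightarrow> P (x + y)"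
  shows "P x"
proof (induct x rule: update_induct)
  case const then show ?case using assms(1) .
next
  case (update f a b)
  have "Poly_Mapping.update a b f = f + Poly_Mapping.single a b"
    using update by (simp add: update_as_add in_keys_iff)
  then show ?case using update assms(2,3) by simp
qed

lemma sc_central: "(Poly_Mapping.single 0 c :: ('i,'r) falg) * x = x * Poly_Mapping.single 0 c"
proof (induct x rule: pm_induct)
  case (2 w d) then show ?case by (simp add: mult_single mult.commute)
qed (simp_all add: distrib_left distrib_right)

lemma sc_mult_left: "sc c (x * y) = sc c x * (y :: ('i,'r) falg)" by (simp add: sc_def mult.assoc)
lemma sc_mult_right: "x * sc c y = sc c (x * (y :: ('i,'r) falg))"
  unfolding sc_def by (metis mult.assoc sc_central)
lemma sc_sc: "sc a (sc b x) = sc (a * b) (x :: ('i,'r) falg)" by (simp add: sc_def mult.assoc[symmetric] mult_single)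
lemma sc_1[simp]: "sc 1 (x :: ('i,'r) falg) = x" by (simp add: sc_def)
lemma sc_0[simp]: "sc 0 (x :: ('i,'r) falg) = 0" by (simp add: sc_def)
lemma sc_zero[simp]: "sc c (0 :: ('i,'r) falg) = 0" by (simp add: sc_def)
lemma sc_add_scal: "sc (a + b) (x :: ('i,'r) falg) = sc a x + sc b x" by (simp add: sc_def single_add distrib_right)
lemma sc_add: "sc c (x + y) = sc c x + sc c (y :: ('i,'r) falg)" by (simp add: sc_def distrib_left)
lemma sc_diff: "sc c (x - y) = sc c x - sc c (y :: ('i,'r) falg)" by (simp add: sc_def right_diff_distrib)
lemma sc_uminus: "sc c (- x) = - sc c (x :: ('i,'r) falg)" by (simp add: sc_def)
lemma sc_single: "sc c (Poly_Mapping.single w d) = (Poly_Mapping.single w (c * d) :: ('i,'r) falg)"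
  by (simp add: sc_def mult_single)
lemma sc_sum: "sc c (sum f A) = (\<Sum>a\<in>A. sc c (f a :: ('i,'r) falg))"
  by (simp add: sc_def sum_distrib_left)

definition psiw :: "(('i,'r) gen \<Rightarrow> ('i,'r) falg) \<Rightarrow> ('i,'r) gen word \<Rightarrow> ('i,'r) falg" where
  "psiw g w = prod_list (map g (unwd w))"

lemma psiw_plus: "psiw g (u + w) = psiw g u * psiw g w"
  by (simp add: psiw_def plus_word_def)
lemma psiw_0: "psiw g 0 = 1" by (simp add: psiw_def zero_word_def)

definition Psi :: "(('i,'r) gen \<Rightarrow> ('i,'r) falg) \<Rightarrow> ('i,'r) falg \<Rightarrow> ('i,'r) falg" where
  "Psi g x = (\<Sum>w\<in>Poly_Mapping.keys x. sc (dag (Poly_Mapping.lookup x w)) (psiw g w))"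

lemma Psi_sub: assumes "finite A" "Poly_Mapping.keys x \<subseteq> A"
  shows "Psi g x = (\<Sum>w\<in>A. sc (dag (Poly_Mapping.lookup x w)) (psiw g w))"
  unfolding Psi_def
  by (rule sum.mono_neutral_left) (use assms in \<open>auto simp: in_keys_iff\<close>)

lemma Psi_add: "Psi g (x + y) = Psi g x + Psi g y"
proof -
  let ?A = "Poly_Mapping.keys x \<union> Poly_Mapping.keys y"
  have "Psi g (x + y) = (\<Sum>w\<in>?A. sc (dag (Poly_Mapping.lookup (x+y) w)) (psiw g w))"
    by (rule Psi_sub) (simp_all add: keys_add)
  also have "\<dots> = (\<Sum>w\<in>?A. sc (dag (Poly_Mapping.lookup x w)) (psiw g w)) +
                  (\<Sum>w\<in>?A. sc (dag (Poly_Mapping.lookup y w)) (psiw g w))"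
    by (simp add: lookup_add sc_add_scal sum.distrib)
  also have "\<dots> = Psi g x + Psi g y"
    by (subst (1 2) Psi_sub[of ?A]) auto
  finally show ?thesis .
qed

lemma Psi_single: "Psi g (Poly_Mapping.single w c) = sc (dag c) (psiw g w)"
  by (simp add: Psi_def)

lemma Psi_0[simp]: "Psi g 0 = 0" by (simp add: Psi_def)

lemma Psi_uminus: "Psi g (- x) = - Psi g x"
  by (metis Psi_0 Psi_add add.right_inverse add_eq_0_iff)
lemma Psi_diff: "Psi g (x - y) = Psi g x - Psi g y"
  by (metis Psi_add Psi_uminus diff_conv_add_uminus)

lemma sc_mult_both: "sc (a * b) (x * y) = sc a x * sc b (y :: ('i,'r) falg)"
  by (simp add: sc_mult_left sc_mult_right sc_sc mult.commute)

lemma Psi_mult: "Psi g (x * y) = Psi g x * Psi g y"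
proof (induct x rule: pm_induct)
  case (2 w c)
  show ?case
  proof (induct y rule: pm_induct)
    case (2 u d)
    then show ?case by (simp add: mult_single Psi_single psiw_plus sc_mult_both)
  qed (simp_all add: distrib_left Psi_add)
qed (simp_all add: distrib_right Psi_add)

lemma Psi_1: "Psi g 1 = 1"
  by (metis Psi_single dag_1 psiw_0 sc_1 single_one)

lemma Psi_sc: "Psi g (sc c x) = sc (dag c) (Psi g x)"
proof -
  have "Psi g (sc c x) = sc (dag c) 1 * Psi g x"
    unfolding sc_def by (simp add: Psi_mult Psi_single psiw_0 sc_def)
  then show ?thesis by (metis sc_mult_left mult_1)
qed

lemma Psi_power: "Psi g (x ^ n) = Psi g x ^ n"
  by (induct n) (simp_all add: Psi_1 Psi_mult)

lemma Psi_sum: "Psi g (sum f A) = (\<Sum>a\<in>A. Psi g (f a))"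
  by (induct A rule: infinite_finite_induct) (simp_all add: Psi_add)

lemma Psi_prod_list: "Psi g (prod_list xs) = prod_list (map (Psi g) xs)"
  by (induct xs) (simp_all add: Psi_1 Psi_mult)

lemma Psi_gen: "Psi g (gen a) = g a"
  by (simp add: gen_def Psi_single psiw_def)

lemma Psi_psiw: "Psi g (psiw h w) = psiw (Psi g \<circ> h) w"
  by (simp add: psiw_def Psi_prod_list o_def)

lemma prod_gen: "psiw gen w = Poly_Mapping.single w 1"
proof -
  obtain l where w: "w = Wd l" by (cases w)
  have "prod_list (map gen l) = Poly_Mapping.single (Wd l) 1"
  proof (induct l)
    case Nil then show ?case by (simp add: zero_word_def[symmetric])
  next
    case (Cons a l)
    then show ?case by (simp add: gen_def mult_single plus_word_def)
  qed
  then show ?thesis by (simp add: w psiw_def)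
qed

lemma single_sc: "Poly_Mapping.single w c = sc c (Poly_Mapping.single w 1 :: ('i,'r) falg)"
  by (simp add: sc_single)

lemma ig_uminus: fixes x :: "'a::ring_1" shows "x \<in> ideal_gen S \<Longrightarrow> - x \<in> ideal_gen S"
  using ideal_gen.mult[of x S "-1" 1] by simp
lemma ig_diff: fixes x :: "'a::ring_1" shows "x \<in> ideal_gen S \<Longrightarrow> y \<in> ideal_gen S \<Longrightarrow> x - y \<in> ideal_gen S"
  using ideal_gen.add ig_uminus by (metis diff_conv_add_uminus)
lemma ig_left: "x \<in> ideal_gen S \<Longrightarrow> (a::'a::ring_1) * x \<in> ideal_gen S"
  using ideal_gen.mult[of x S a 1] by simp
lemma ig_right: "x \<in> ideal_gen S \<Longrightarrow> x * (a::'a::ring_1) \<in> ideal_gen S"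
  using ideal_gen.mult[of x S 1 a] by simp
lemma ig_sum: "(\<And>a. a \<in> A \<Longrightarrow> f a \<in> ideal_gen S) \<Longrightarrow> sum f A \<in> ideal_gen S"
  by (induct A rule: infinite_finite_induct) (auto intro: ideal_gen.zero ideal_gen.add)

lemma Psi_ideal: assumes "\<And>s. s \<in> S \<Longrightarrow> Psi g s \<in> ideal_gen S"
  shows "x \<in> ideal_gen S \<Longrightarrow> Psi g x \<in> ideal_gen S"
proof (induct x rule: ideal_gen.induct)
  case (base x) then show ?case using assms by simp
next
  case zero then show ?case by (simp add: ideal_gen.zero)
next
  case (add x y) then show ?case by (simp add: Psi_add ideal_gen.add)
next
  case (mult x a b) then show ?case by (simp add: Psi_mult ideal_gen.mult)
qed

definition cg :: "'a::ring_1 set \<Rightarrow> 'a \<Rightarrow> 'a \<Rightarrow> bool" where "cg S x y \<longleftrightarrow> x - y \<in> ideal_gen S"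

lemma cg_refl[simp]: "cg S x x" by (simp add: cg_def ideal_gen.zero)
lemma cg_sym: "cg S x y \<Longrightarrow> cg S y x" unfolding cg_def by (metis ig_uminus minus_diff_eq)
lemma cg_trans[trans]: "cg S x y \<Longrightarrow> cg S y z \<Longrightarrow> cg S x z"
  unfolding cg_def by (metis ideal_gen.add diff_add_cancel add_diff_eq diff_diff_eq2 add.commute)
lemma cg_eq_trans[trans]: "x = y \<Longrightarrow> cg S y z \<Longrightarrow> cg S x z" by simp
lemma cg_trans_eq[trans]: "cg S x y \<Longrightarrow> y = z \<Longrightarrow> cg S x z" by simp
lemma cg_add: "cg S x y \<Longrightarrow> cg S x' y' \<Longrightarrow> cg S (x + x') (y + y')"
  unfolding cg_def by (metis ideal_gen.add add_diff_add)
lemma cg_diff: "cg S x y \<Longrightarrow> cg S x' y' \<Longrightarrow> cg S (x - x') (y - y')"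
  unfolding cg_def by (metis ig_diff diff_diff_eq add.commute diff_add_eq diff_diff_eq2 add_diff_add diff_conv_add_uminus minus_diff_eq)
lemma cg_mult: "cg S x y \<Longrightarrow> cg S x' y' \<Longrightarrow> cg S (x * x') (y * y')"
proof -
  assume a: "cg S x y" "cg S x' y'"
  have "x * x' - y * y' = (x - y) * x' + y * (x' - y')" by (simp add: algebra_simps)
  then show ?thesis using a unfolding cg_def by (metis ideal_gen.add ig_left ig_right)
qed
lemma cg_multL: "cg S x' y' \<Longrightarrow> cg S (x * x') (x * y')" by (simp add: cg_mult)
lemma cg_multR: "cg S x y \<Longrightarrow> cg S (x * x') (y * x')" by (simp add: cg_mult)
lemma cg_sc: "cg S x y \<Longrightarrow> cg S (sc c x) (sc c (y :: ('i,'r) falg))"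
  unfolding sc_def by (simp add: cg_mult)
lemma cg_base: "x - y \<in> S \<Longrightarrow> cg S x y" by (simp add: cg_def ideal_gen.base)
lemma cg_base0: "x \<in> S \<Longrightarrow> cg S x 0" by (simp add: cg_def ideal_gen.base)
lemma cg_sum: "(\<And>a. a \<in> A \<Longrightarrow> cg S (f a) (h a)) \<Longrightarrow> cg S (sum f A) (sum h A)"
  unfolding cg_def by (simp add: sum_subtractf[symmetric] ig_sum)
lemma cg_prod_list: "(\<And>a. a \<in> set l \<Longrightarrow> cg S (f a) (h a)) \<Longrightarrow> cg S (prod_list (map f l)) (prod_list (map h l))"
  by (induct l) (simp_all add: cg_mult)
lemma cg_power: "cg S x y \<Longrightarrow> cg S (x ^ n) (y ^ n)"
  by (induct n) (simp_all add: cg_mult)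

lemma Psi_Psi: assumes "\<And>a. cg S (Psi g (g a)) (gen a)"
  shows "cg S (Psi g (Psi g x)) x"
proof (induct x rule: pm_induct)
  case (2 w c)
  have "Psi g (Psi g (Poly_Mapping.single w c)) = sc c (psiw (Psi g \<circ> g) w)"
    by (simp add: Psi_single Psi_sc Psi_psiw)
  also have "cg S \<dots> (sc c (psiw gen w))"
    unfolding psiw_def by (intro cg_sc cg_prod_list) (simp add: assms)
  also have "\<dots> = Poly_Mapping.single w c" by (simp add: prod_gen sc_single)
  finally show ?case .
next
  case (3 x y) then show ?case by (simp add: Psi_add cg_add)
qed simp


definition gpsi :: "('i \<Rightarrow> 'i \<Rightarrow> int) \<Rightarrow> ('i \<Rightarrow> 'r \<Rightarrow> int) \<Rightarrow> ('i, 'r) gen \<Rightarrow> ('i, 'r) falg" where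
  "gpsi dot yI a = (case a of GE i \<Rightarrow> sc (ppw (dI dot i)) (Jg (ytil dot yI i) * Eg i)
      | GF i \<Rightarrow> Fg i | GK \<nu> \<Rightarrow> Jg \<nu> * Kg \<nu> | GJ \<nu> \<Rightarrow> Jg \<nu>)"

lemma scn: "sc c x * y = sc c (x * y)" "x * sc c y = sc c (x * y)" "sc a (sc b x) = sc (a * b) x"
  by (simp_all add: sc_mult_left sc_mult_right sc_sc)

definition comm :: "'a::ring_1 set \<Rightarrow> 'a \<Rightarrow> 'a \<Rightarrow> bool" where "comm S x y \<longleftrightarrow> cg S (x * y) (y * x)"

lemma comm_sym: "comm S x y \<Longrightarrow> comm S y x" by (simp add: comm_def cg_sym)
lemma comm_mult_r: assumes "comm S x y" "comm S x z" shows "comm S x (y * z)"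
proof -
  have "x * (y * z) = (x * y) * z" by (simp add: mult.assoc)
  also have "cg S \<dots> ((y * x) * z)" using assms(1) by (simp add: comm_def cg_multR)
  also have "\<dots> = y * (x * z)" by (simp add: mult.assoc)
  also have "cg S \<dots> (y * (z * x))" using assms(2) by (simp add: comm_def cg_multL)
  finally show ?thesis by (simp add: comm_def mult.assoc)
qed
lemma comm_one: "comm S x 1" by (simp add: comm_def)
lemma comm_pow_r: "comm S x y \<Longrightarrow> comm S x (y ^ n)"
  by (induct n) (simp_all add: comm_one comm_mult_r)
lemma comm_pow_l: "comm S x y \<Longrightarrow> comm S (x ^ n) y"
  by (meson comm_pow_r comm_sym)
lemma comm_mult_l: "comm S x z \<Longrightarrow> comm S y z \<Longrightarrow> comm S (x * y) z"
  by (meson comm_mult_r comm_sym)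
lemma comm_self: "comm S x x" by (simp add: comm_def)

lemma cg_0I: "cg S x y \<Longrightarrow> cg S (x - y) 0"
  by (simp add: cg_def)
lemma cg_0D: "cg S x 0 \<Longrightarrow> x \<in> ideal_gen S" by (simp add: cg_def)

locale qcgctx =
  fixes dot :: "'i::finite \<Rightarrow> 'i \<Rightarrow> int" and par :: "'i \<Rightarrow> bool"
    and yI :: "'i \<Rightarrow> 'r::finite \<Rightarrow> int" and xI :: "'i \<Rightarrow> 'r \<Rightarrow> int"
  assumes SC: "super_cartan dot par" and RD: "root_datum dot yI xI"
begin

abbreviation "SS \<equiv> qcg_rels dot par yI xI"
abbreviation "g \<equiv> gpsi dot yI"
abbreviation "eqv \<equiv> cg SS"
abbreviation "T i \<equiv> Jg (ytil dot yI i)"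

lemma SC1: "even (dot i i)" "dot i i > 0" using SC unfolding super_cartan_def by blast+
lemma SC2: "i \<noteq> j \<Longrightarrow> par i \<Longrightarrow> even (aI dot i j)" using SC unfolding super_cartan_def by blast
lemma SC3: "i \<noteq> j \<Longrightarrow> aI dot i j \<le> 0" using SC unfolding super_cartan_def by blast
lemma SC4: "odd (dI dot i) \<longleftrightarrow> par i" using SC unfolding super_cartan_def by blast

lemma dI_pos: "dI dot i > 0"
proof -
  have "even (dot i i)" "dot i i > 0" using SC1 by auto
  then show ?thesis by (auto simp: dI_def)
qed

lemma pairing_ytil: "pairing (ytil dot yI i) x = dI dot i * pairing (yI i) x"
  by (simp add: pairing_def ytil_def sum_distrib_left mult.assoc)

lemma even_pairing: "even (pairing (ytil dot yI i) (xI j))"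
proof -
  have pa: "pairing (yI i) (xI j) = aI dot i j" using RD by (simp add: root_datum_def)
  show ?thesis
  proof (cases "par i")
    case True
    show ?thesis
    proof (cases "i = j")
      case True
      have "dot i i > 0" using SC1 by auto
      then have "aI dot i i = 2" by (simp add: aI_def)
      then show ?thesis using True pa by (simp add: pairing_ytil)
    next
      case False
      then have "even (aI dot i j)" using SC2 \<open>par i\<close> by auto
      then show ?thesis using pa by (simp add: pairing_ytil)
    qed
  next
    case False
    then have "even (dI dot i)" using SC4 by auto
    then show ?thesis by (simp add: pairing_ytil)
  qed
qed

lemma serre_parity: "i \<noteq> j \<Longrightarrow> even (dI dot i) \<or> odd (nat (1 - aI dot i j))"
proof (cases "par i")
  case True
  assume ij: "i \<noteq> j"
  then have "even (aI dot i j)" "aI dot i j \<le> 0" using SC2 SC3 True by auto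
  then have "odd (1 - aI dot i j)" "1 - aI dot i j \<ge> 0" by auto
  then show ?thesis by (simp add: even_nat_iff)
next
  case False
  then show ?thesis using SC4 by auto
qed

lemmas rels = qcg_rels_def

lemma R_KK: "eqv (Kg \<mu> * Kg \<nu>) (Kg (\<mu> + \<nu>))" by (rule cg_base) (unfold rels, rule UnI1, rule UnI1, rule UnI1, rule UnI1, rule UnI1, rule UnI1, rule UnI1, rule UnI1, rule UnI1, rule UnI1, rule UnI1, rule CollectI, (intro exI conjI TrueI refl)?, simp?)
lemma R_JJ: "eqv (Jg \<mu> * Jg \<nu>) (Jg (\<mu> + \<nu>))" by (rule cg_base) (unfold rels, rule UnI1, rule UnI1, rule UnI1, rule UnI1, rule UnI1, rule UnI1, rule UnI1, rule UnI1, rule UnI1, rule UnI1, rule UnI2, rule CollectI, (intro exI conjI TrueI refl)?, simp?)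
lemma R_K0: "eqv (Kg 0) 1" by (rule cg_base) (unfold rels, rule UnI1, rule UnI1, rule UnI1, rule UnI1, rule UnI1, rule UnI1, rule UnI1, rule UnI1, rule UnI1, rule UnI2, simp)
lemma R_J0: "eqv (Jg 0) 1" by (rule cg_base) (unfold rels, rule UnI1, rule UnI1, rule UnI1, rule UnI1, rule UnI1, rule UnI1, rule UnI1, rule UnI1, rule UnI1, rule UnI2, simp)
lemma R_Jsq: "eqv (Jg \<nu> * Jg \<nu>) 1" by (rule cg_base) (unfold rels, rule UnI1, rule UnI1, rule UnI1, rule UnI1, rule UnI1, rule UnI1, rule UnI1, rule UnI1, rule UnI2, rule CollectI, (intro exI conjI TrueI refl)?, simp?)
lemma R_JK: "eqv (Jg \<mu> * Kg \<nu>) (Kg \<nu> * Jg \<mu>)" by (rule cg_base) (unfold rels, rule UnI1, rule UnI1, rule UnI1, rule UnI1, rule UnI1, rule UnI1, rule UnI1, rule UnI2, rule CollectI, (intro exI conjI TrueI refl)?, simp?)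
lemma R_JE: "eqv (Jg \<mu> * Eg i) (sc (ppw (pairing \<mu> (xI i))) (Eg i * Jg \<mu>))" by (rule cg_base) (unfold rels, rule UnI1, rule UnI1, rule UnI1, rule UnI1, rule UnI1, rule UnI1, rule UnI2, rule CollectI, (intro exI conjI TrueI refl)?, simp?)
lemma R_JF: "eqv (Jg \<mu> * Fg i) (sc (ppw (- pairing \<mu> (xI i))) (Fg i * Jg \<mu>))" by (rule cg_base) (unfold rels, rule UnI1, rule UnI1, rule UnI1, rule UnI1, rule UnI1, rule UnI2, rule CollectI, (intro exI conjI TrueI refl)?, simp?)
lemma R_KE: "eqv (Kg \<mu> * Eg i) (sc (vpw (pairing \<mu> (xI i))) (Eg i * Kg \<mu>))" by (rule cg_base) (unfold rels, rule UnI1, rule UnI1, rule UnI1, rule UnI1, rule UnI2, rule CollectI, (intro exI conjI TrueI refl)?, simp?)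
lemma R_KF: "eqv (Kg \<mu> * Fg i) (sc (vpw (- pairing \<mu> (xI i))) (Fg i * Kg \<mu>))" by (rule cg_base) (unfold rels, rule UnI1, rule UnI1, rule UnI1, rule UnI2, rule CollectI, (intro exI conjI TrueI refl)?, simp?)
lemma R_EF: "eqv (Eg i * Fg j - sc (ppw (pI par i * pI par j)) (Fg j * Eg i))
        (if i = j then sc (qinv (ppw (dI dot i) * vpw (dI dot i) - vpw (- dI dot i)))
                           (Jg (ytil dot yI i) * Kg (ytil dot yI i) - Kg (- ytil dot yI i))
           else 0)" by (rule cg_base) (unfold rels, simp only: Un_iff mem_Collect_eq insert_iff, blast)
lemma R_SE: "i \<noteq> j \<Longrightarrow> eqv (serre dot par Eg i j) 0" by (rule cg_base0) (unfold rels, rule UnI1, rule UnI2, rule CollectI, (intro exI conjI TrueI refl)?, simp?)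
lemma R_SF: "i \<noteq> j \<Longrightarrow> serre dot par Fg i j \<in> SS" by (unfold rels, rule UnI2, rule CollectI, (intro exI conjI TrueI refl)?, simp?)

end


lemma cg_symc: "comm S x y \<Longrightarrow> cg S (y * x) (x * y)" by (simp add: comm_def cg_sym)
lemma cg_c: "comm S x y \<Longrightarrow> cg S (x * y) (y * x)" by (simp add: comm_def)

lemma L1: assumes "comm S T E"
  shows "cg S ((sc a (T * E)) ^ m) (sc (a ^ m) (T ^ m * E ^ m) :: ('i,'r) falg)"
proof (induct m)
  case 0 then show ?case by simp
next
  case (Suc m)
  have "(sc a (T * E)) ^ Suc m = (sc a (T * E)) ^ m * sc a (T * E)" by (rule power_Suc2)
  also have "cg S \<dots> (sc (a ^ m) (T ^ m * E ^ m) * sc a (T * E))" by (rule cg_multR, rule Suc)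
  also have "\<dots> = sc (a ^ Suc m) (T ^ m * (E ^ m * T) * E)" by (simp add: scn mult.assoc ac_simps)
  also have "cg S \<dots> (sc (a ^ Suc m) (T ^ m * (T * E ^ m) * E))"
    by (rule cg_sc, rule cg_multR, rule cg_multL, rule cg_symc, rule comm_pow_r, rule assms)
  also have "\<dots> = sc (a ^ Suc m) (T ^ Suc m * E ^ Suc m)" by (simp del: power_Suc add: power_Suc2 mult.assoc)
  finally show ?case .
qed

lemma L2: assumes "comm S T E" "comm S T E'" "comm S T' E" "comm S T T'"
  shows "cg S ((sc a (T * E)) ^ n * sc a' (T' * E') * (sc a (T * E)) ^ k)
             (sc (a ^ (n + k) * a') (T ^ (n + k) * T' * (E ^ n * E' * E ^ k)) :: ('i,'r) falg)"
proof -
  have "cg S ((sc a (T * E)) ^ n * sc a' (T' * E') * (sc a (T * E)) ^ k)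
      (sc (a ^ n) (T ^ n * E ^ n) * sc a' (T' * E') * sc (a ^ k) (T ^ k * E ^ k))"
    by (rule cg_mult, rule cg_multR, rule L1, rule assms(1), rule L1, rule assms(1))
  also have "\<dots> = sc (a ^ (n + k) * a') (T ^ n * (E ^ n * T') * E' * T ^ k * E ^ k)"
    by (simp add: scn mult.assoc ac_simps power_add)
  also have "cg S \<dots> (sc (a ^ (n + k) * a') (T ^ n * (T' * E ^ n) * E' * T ^ k * E ^ k))"
    by (rule cg_sc, rule cg_multR, rule cg_multR, rule cg_multR, rule cg_multL, rule cg_symc,
        rule comm_pow_r, rule assms(3))
  also have "\<dots> = sc (a ^ (n + k) * a') ((T ^ n * T') * ((E ^ n * E') * T ^ k) * E ^ k)"
    by (simp add: mult.assoc)
  also have "cg S \<dots> (sc (a ^ (n + k) * a') ((T ^ n * T') * (T ^ k * (E ^ n * E')) * E ^ k))"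
    by (rule cg_sc, rule cg_multR, rule cg_multL, rule cg_symc, rule comm_pow_l,
        rule comm_mult_r, rule comm_pow_r, rule assms(1), rule assms(2))
  also have "\<dots> = sc (a ^ (n + k) * a') ((T ^ n * T' * T ^ k) * (E ^ n * E' * E ^ k))"
    by (simp add: mult.assoc)
  also have "\<dots> = sc (a ^ (n + k) * a') ((T ^ n * (T' * T ^ k)) * (E ^ n * E' * E ^ k))"
    by (simp add: mult.assoc)
  also have "cg S \<dots> (sc (a ^ (n + k) * a') ((T ^ n * (T ^ k * T')) * (E ^ n * E' * E ^ k)))"
    by (rule cg_sc, rule cg_multR, rule cg_multL, rule cg_c, rule comm_pow_r, rule comm_sym, rule assms(4))
  also have "\<dots> = sc (a ^ (n + k) * a') (T ^ (n + k) * T' * (E ^ n * E' * E ^ k))"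
    by (simp add: mult.assoc power_add)
  finally show ?thesis .
qed

context qcgctx
begin
lemma Psi_E: "Psi g (Eg i) = sc (ppw (dI dot i)) (T i * Eg i)" by (simp add: Psi_gen gpsi_def)
lemma Psi_F: "Psi g (Fg i) = Fg i" by (simp add: Psi_gen gpsi_def)
lemma Psi_K: "Psi g (Kg \<nu>) = Jg \<nu> * Kg \<nu>" by (simp add: Psi_gen gpsi_def)
lemma Psi_J: "Psi g (Jg \<nu>) = Jg \<nu>" by (simp add: Psi_gen gpsi_def)

lemmas Psis = Psi_E Psi_F Psi_K Psi_J Psi_mult Psi_diff Psi_add Psi_sc Psi_1 Psi_0

lemma C_JJ: "comm SS (Jg \<mu>) (Jg \<nu>)"
proof -
  have "eqv (Jg \<mu> * Jg \<nu>) (Jg (\<nu> + \<mu>))" using R_JJ[of \<mu> \<nu>] by (simp add: add.commute)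
  also have "eqv \<dots> (Jg \<nu> * Jg \<mu>)" by (rule cg_sym, rule R_JJ)
  finally show ?thesis by (simp add: comm_def)
qed
lemma C_JK: "comm SS (Jg \<mu>) (Kg \<nu>)" unfolding comm_def by (rule R_JK)
lemma C_TE: "comm SS (T i) (Eg j)"
  using R_JE[of "ytil dot yI i" j] even_pairing[of i j] by (simp add: comm_def ppw_even)
lemma C_TF: "comm SS (T i) (Fg j)"
  using R_JF[of "ytil dot yI i" j] even_pairing[of i j] by (simp add: comm_def ppw_even)


lemma C_JKc: "eqv (Jg \<mu> * Kg \<nu>) (Kg \<nu> * Jg \<mu>)" using C_JK by (simp add: comm_def)
lemma C_JJc: "eqv (Jg \<mu> * Jg \<nu>) (Jg \<nu> * Jg \<mu>)" using C_JJ by (simp add: comm_def)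

lemma P_KK: "Psi g (Kg \<mu> * Kg \<nu> - Kg (\<mu> + \<nu>)) \<in> ideal_gen SS"
proof -
  have "Jg \<mu> * Kg \<mu> * (Jg \<nu> * Kg \<nu>) = Jg \<mu> * (Kg \<mu> * Jg \<nu>) * Kg \<nu>" by (simp add: mult.assoc)
  also have "eqv \<dots> (Jg \<mu> * (Jg \<nu> * Kg \<mu>) * Kg \<nu>)" by (rule cg_multR, rule cg_multL, rule cg_sym, rule C_JKc)
  also have "\<dots> = (Jg \<mu> * Jg \<nu>) * (Kg \<mu> * Kg \<nu>)" by (simp add: mult.assoc)
  also have "eqv \<dots> (Jg (\<mu> + \<nu>) * Kg (\<mu> + \<nu>))" by (rule cg_mult[OF R_JJ R_KK])
  finally show ?thesis by (intro cg_0D) (simp add: Psis cg_0I)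
qed

lemma P_JJ: "Psi g (Jg \<mu> * Jg \<nu> - Jg (\<mu> + \<nu>)) \<in> ideal_gen SS"
  by (intro cg_0D) (simp add: Psis cg_0I R_JJ)
lemma P_K0: "Psi g (Kg 0 - 1) \<in> ideal_gen SS"
proof -
  have "eqv (Jg 0 * Kg 0) (1 * 1)" by (rule cg_mult[OF R_J0 R_K0])
  then show ?thesis by (intro cg_0D) (simp add: Psis cg_0I)
qed
lemma P_J0: "Psi g (Jg 0 - 1) \<in> ideal_gen SS"
  by (intro cg_0D) (simp add: Psis cg_0I R_J0)
lemma P_Jsq: "Psi g (Jg \<nu> * Jg \<nu> - 1) \<in> ideal_gen SS"
  by (intro cg_0D) (simp add: Psis cg_0I R_Jsq)
lemma P_JK: "Psi g (Jg \<mu> * Kg \<nu> - Kg \<nu> * Jg \<mu>) \<in> ideal_gen SS"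
proof -
  have "Jg \<mu> * (Jg \<nu> * Kg \<nu>) = (Jg \<mu> * Jg \<nu>) * Kg \<nu>" by (simp add: mult.assoc)
  also have "eqv \<dots> ((Jg \<nu> * Jg \<mu>) * Kg \<nu>)" by (intro cg_multR C_JJc)
  also have "\<dots> = Jg \<nu> * (Jg \<mu> * Kg \<nu>)" by (simp add: mult.assoc)
  also have "eqv \<dots> (Jg \<nu> * (Kg \<nu> * Jg \<mu>))" by (intro cg_multL C_JKc)
  also have "\<dots> = Jg \<nu> * Kg \<nu> * Jg \<mu>" by (simp add: mult.assoc)
  finally show ?thesis by (intro cg_0D) (simp add: Psis cg_0I)
qed
lemma P_JE: "Psi g (Jg \<mu> * Eg i - sc (ppw (pairing \<mu> (xI i))) (Eg i * Jg \<mu>)) \<in> ideal_gen SS"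
proof -
  let ?p = "ppw (dI dot i)" and ?n = "ppw (pairing \<mu> (xI i))"
  have "Jg \<mu> * sc ?p (T i * Eg i) = sc ?p ((Jg \<mu> * T i) * Eg i)" by (simp add: scn mult.assoc)
  also have "eqv \<dots> (sc ?p ((T i * Jg \<mu>) * Eg i))" by (intro cg_sc cg_multR C_JJc)
  also have "\<dots> = sc ?p (T i * (Jg \<mu> * Eg i))" by (simp add: mult.assoc)
  also have "eqv \<dots> (sc ?p (T i * sc ?n (Eg i * Jg \<mu>)))" by (intro cg_sc cg_multL R_JE)
  also have "\<dots> = sc ?n (sc ?p (T i * Eg i) * Jg \<mu>)" by (simp add: scn mult.assoc ac_simps)
  finally show ?thesis by (intro cg_0D) (simp add: Psis cg_0I)
qed
lemma P_JF: "Psi g (Jg \<mu> * Fg i - sc (ppw (- pairing \<mu> (xI i))) (Fg i * Jg \<mu>)) \<in> ideal_gen SS"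
  using R_JF[of \<mu> i] by (intro cg_0D) (simp add: Psis cg_0I del: ppw_uminus)
lemma P_KE: "Psi g (Kg \<mu> * Eg i - sc (vpw (pairing \<mu> (xI i))) (Eg i * Kg \<mu>)) \<in> ideal_gen SS"
proof -
  let ?p = "ppw (dI dot i)" and ?n = "ppw (pairing \<mu> (xI i))" and ?v = "vpw (pairing \<mu> (xI i))"
  have "Jg \<mu> * Kg \<mu> * sc ?p (T i * Eg i) = sc ?p (Jg \<mu> * (Kg \<mu> * T i) * Eg i)" by (simp add: scn mult.assoc)
  also have "eqv \<dots> (sc ?p (Jg \<mu> * (T i * Kg \<mu>) * Eg i))" by (rule cg_sc, rule cg_multR, rule cg_multL, rule cg_sym, rule C_JKc)
  also have "\<dots> = sc ?p ((Jg \<mu> * T i) * (Kg \<mu> * Eg i))" by (simp add: mult.assoc)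
  also have "eqv \<dots> (sc ?p ((T i * Jg \<mu>) * (Kg \<mu> * Eg i)))" by (intro cg_sc cg_multR C_JJc)
  also have "eqv \<dots> (sc ?p ((T i * Jg \<mu>) * sc ?v (Eg i * Kg \<mu>)))" by (intro cg_sc cg_multL R_KE)
  also have "\<dots> = sc (?p * ?v) (T i * (Jg \<mu> * Eg i) * Kg \<mu>)" by (simp add: scn mult.assoc)
  also have "eqv \<dots> (sc (?p * ?v) (T i * sc ?n (Eg i * Jg \<mu>) * Kg \<mu>))" by (intro cg_sc cg_multR cg_multL R_JE)
  also have "\<dots> = sc (?n * ?v) (sc ?p (T i * Eg i) * (Jg \<mu> * Kg \<mu>))" by (simp add: scn mult.assoc ac_simps)
  finally show ?thesis by (intro cg_0D) (simp add: Psis cg_0I dag_vpw)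
qed
lemma P_KF: "Psi g (Kg \<mu> * Fg i - sc (vpw (- pairing \<mu> (xI i))) (Fg i * Kg \<mu>)) \<in> ideal_gen SS"
proof -
  let ?n = "ppw (- pairing \<mu> (xI i))" and ?v = "vpw (- pairing \<mu> (xI i))"
  have "Jg \<mu> * Kg \<mu> * Fg i = Jg \<mu> * (Kg \<mu> * Fg i)" by (simp add: mult.assoc)
  also have "eqv \<dots> (Jg \<mu> * sc ?v (Fg i * Kg \<mu>))" by (intro cg_multL R_KF)
  also have "\<dots> = sc ?v ((Jg \<mu> * Fg i) * Kg \<mu>)" by (simp add: scn mult.assoc)
  also have "eqv \<dots> (sc ?v (sc ?n (Fg i * Jg \<mu>) * Kg \<mu>))" by (intro cg_sc cg_multR R_JF)
  also have "\<dots> = sc (?n * ?v) (Fg i * (Jg \<mu> * Kg \<mu>))" by (simp add: scn mult.assoc ac_simps)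
  finally show ?thesis by (intro cg_0D) (simp add: Psis cg_0I dag_vpw del: ppw_uminus)
qed


lemma C_Jneg: "eqv (Jg (- t)) (Jg t)"
proof -
  have "Jg (- t) = Jg (- t) * 1" by simp
  also have "eqv \<dots> (Jg (- t) * (Jg t * Jg t))" by (rule cg_multL, rule cg_sym, rule R_Jsq)
  also have "\<dots> = (Jg (- t) * Jg t) * Jg t" by (simp add: mult.assoc)
  also have "eqv \<dots> (Jg (- t + t) * Jg t)" by (rule cg_multR, rule R_JJ)
  also have "\<dots> = Jg 0 * Jg t" by simp
  also have "eqv \<dots> (1 * Jg t)" by (rule cg_multR, rule R_J0)
  finally show ?thesis by simp
qed

lemma dag_q: assumes "d > 0"
  shows "dag (qinv (ppw d * vpw d - vpw (- d))) = ppw d * qinv (ppw d * vpw d - vpw (- d))"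
proof -
  define X where "X = ppw d * vpw d - vpw (- d)"
  have X: "X = Nf d 1" by (simp add: Nf_def X_def)
  have u: "X * qinv X = 1" using Nf_unit[OF assms, of 1] X by simp
  have "dag (qinv X) = qinv (dag X)" by (rule dag_qinv[OF u])
  also have "dag X = ppw d * X" using dag_Nf[of d 1] X by simp
  also have "qinv (ppw d * X) = ppw d * qinv X"
    by (rule qinv_eq) (metis u ppw_sq mult.commute mult.left_commute mult_1)
  finally show ?thesis by (simp add: X_def)
qed

lemma P_EF: "Psi g (Eg i * Fg j - sc (ppw (pI par i * pI par j)) (Fg j * Eg i)
        - (if i = j then sc (qinv (ppw (dI dot i) * vpw (dI dot i) - vpw (- dI dot i)))
                           (Jg (ytil dot yI i) * Kg (ytil dot yI i) - Kg (- ytil dot yI i))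
           else 0)) \<in> ideal_gen SS"
proof -
  let ?P = "ppw (pI par i * pI par j)" and ?p = "ppw (dI dot i)"
  define A :: "('i,'r) falg" where "A = Eg i * Fg j - sc ?P (Fg j * Eg i)"
  define B :: "('i,'r) falg" where "B = (if i = j then sc (qinv (ppw (dI dot i) * vpw (dI dot i) - vpw (- dI dot i)))
                           (Jg (ytil dot yI i) * Kg (ytil dot yI i) - Kg (- ytil dot yI i))
           else 0)"
  have hA: "eqv A B" unfolding A_def B_def by (rule R_EF)
  have "Psi g A = sc ?p (T i * Eg i) * Fg j - sc ?P (Fg j * sc ?p (T i * Eg i))"
    by (simp add: A_def Psis)
  also have "\<dots> = sc ?p (T i * (Eg i * Fg j)) - sc ?p (sc ?P ((Fg j * T i) * Eg i))"
    by (simp add: scn mult.assoc ac_simps)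
  also have "eqv \<dots> (sc ?p (T i * (Eg i * Fg j)) - sc ?p (sc ?P ((T i * Fg j) * Eg i)))"
    by (rule cg_diff, rule cg_refl, rule cg_sc, rule cg_sc, rule cg_multR, rule cg_symc, rule C_TF)
  also have "\<dots> = sc ?p (T i * A)"
    by (simp add: A_def sc_diff right_diff_distrib scn mult.assoc)
  also have "eqv \<dots> (sc ?p (T i * B))" by (rule cg_sc, rule cg_multL, rule hA)
  finally have 1: "eqv (Psi g A) (sc ?p (T i * B))" .
  have 2: "eqv (sc ?p (T i * B)) (Psi g B)"
  proof (cases "i = j")
    case False then show ?thesis by (simp add: B_def)
  next
    case True
    let ?t = "ytil dot yI i" and ?q = "qinv (ppw (dI dot i) * vpw (dI dot i) - vpw (- dI dot i))"
    have "sc ?p (T i * B) = sc (?p * ?q) (T i * (T i * Kg ?t) - T i * Kg (- ?t))"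
      using True by (simp add: B_def scn right_diff_distrib mult.assoc ac_simps)
    also have "eqv \<dots> (sc (?p * ?q) (T i * (T i * Kg ?t) - Jg (- ?t) * Kg (- ?t)))"
      by (rule cg_sc, rule cg_diff, rule cg_refl, rule cg_multR, rule cg_sym, rule C_Jneg)
    also have "\<dots> = Psi g B"
      using True by (simp add: B_def Psis dag_q[OF dI_pos])
    finally show ?thesis .
  qed
  have "eqv (Psi g A - Psi g B) 0" by (rule cg_0I, rule cg_trans[OF 1 2])
  then show ?thesis unfolding A_def[symmetric] B_def[symmetric] by (simp add: Psi_diff cg_def)
qed

lemma serre_expand: "serre dot par X i j = (\<Sum>k\<in>{0..nat (1 - aI dot i j)}.
   sc ((-1) ^ k * ppw (int (k choose 2) * pI par i + int k * pI par i * pI par j)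
        * qbinom (nat (1 - aI dot i j)) k (dI dot i))
      (X i ^ (nat (1 - aI dot i j) - k) * X j * X i ^ k))"
  by (simp add: serre_def Let_def)

lemma dag_serre_coeff: assumes "i \<noteq> j" "k \<le> nat (1 - aI dot i j)"
  shows "dag ((-1) ^ k * ppw (int (k choose 2) * pI par i + int k * pI par i * pI par j)
        * qbinom (nat (1 - aI dot i j)) k (dI dot i)) =
      (-1) ^ k * ppw (int (k choose 2) * pI par i + int k * pI par i * pI par j)
        * qbinom (nat (1 - aI dot i j)) k (dI dot i)"
  using dag_qbinom_fixed[OF dI_pos assms(2) serre_parity[OF assms(1)]] by simp

lemma dag_qb_serre: "i \<noteq> j \<Longrightarrow> k \<in> {0..nat (1 - aI dot i j)} \<Longrightarrow>
   dag (qbinom (nat (1 - aI dot i j)) k (dI dot i)) = qbinom (nat (1 - aI dot i j)) k (dI dot i)"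
  using dag_qbinom_fixed[OF dI_pos _ serre_parity] by simp

lemma P_SF: assumes "i \<noteq> j" shows "Psi g (serre dot par Fg i j) \<in> ideal_gen SS"
proof -
  have "Psi g (serre dot par Fg i j) = serre dot par Fg i j"
    unfolding serre_expand Psi_sum
    by (rule sum.cong[OF refl]) (simp add: Psi_sc Psi_mult Psi_power Psi_F dag_qb_serre[OF assms])
  then show ?thesis using R_SF[OF assms] by (simp add: ideal_gen.base)
qed

lemma P_SE: assumes ij: "i \<noteq> j" shows "Psi g (serre dot par Eg i j) \<in> ideal_gen SS"
proof -
  define b where "b = nat (1 - aI dot i j)"
  define c where "c k = (-1) ^ k * ppw (int (k choose 2) * pI par i + int k * pI par i * pI par j)
        * qbinom b k (dI dot i)" for k
  define M :: "nat \<Rightarrow> ('i,'r) falg" where "M k = Eg i ^ (b - k) * Eg j * Eg i ^ k" for k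
  let ?p = "ppw (dI dot i)" and ?p' = "ppw (dI dot j)"
  have ser: "serre dot par Eg i j = (\<Sum>k\<in>{0..b}. sc (c k) (M k))"
    unfolding serre_expand b_def c_def M_def ..
  have "Psi g (serre dot par Eg i j) = (\<Sum>k\<in>{0..b}. sc (c k)
     ((sc ?p (T i * Eg i)) ^ (b - k) * sc ?p' (T j * Eg j) * (sc ?p (T i * Eg i)) ^ k))"
    unfolding ser M_def
    unfolding Psi_sum
    by (rule sum.cong[OF refl]) (simp add: Psi_sc Psi_mult Psi_power Psi_E c_def b_def dag_qb_serre[OF ij])
  also have "eqv \<dots> (\<Sum>k\<in>{0..b}. sc (c k) (sc (?p ^ b * ?p') (T i ^ b * T j * M k)))"
  proof (rule cg_sum, rule cg_sc)
    fix k assume "k \<in> {0..b}"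
    then have kb: "b - k + k = b" by simp
    show "eqv ((sc ?p (T i * Eg i)) ^ (b - k) * sc ?p' (T j * Eg j) * (sc ?p (T i * Eg i)) ^ k)
              (sc (?p ^ b * ?p') (T i ^ b * T j * M k))"
    proof -
      have "eqv ((sc ?p (T i * Eg i)) ^ (b - k) * sc ?p' (T j * Eg j) * (sc ?p (T i * Eg i)) ^ k)
          (sc (?p ^ (b - k + k) * ?p') (T i ^ (b - k + k) * T j * (Eg i ^ (b - k) * Eg j * Eg i ^ k)))"
        by (rule L2[OF C_TE C_TE C_TE C_JJ])
      then show ?thesis by (simp only: kb M_def)
    qed
  qed
  also have "\<dots> = sc (?p ^ b * ?p') (T i ^ b * T j * serre dot par Eg i j)"
    unfolding ser by (simp add: sum_distrib_left sc_sum scn mult.commute)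
  also have "eqv \<dots> (sc (?p ^ b * ?p') (T i ^ b * T j * 0))"
    by (rule cg_sc, rule cg_multL, rule R_SE[OF ij])
  finally show ?thesis by (simp add: cg_def)
qed

lemma P_all: assumes "s \<in> SS" shows "Psi g s \<in> ideal_gen SS"
  using assms[unfolded rels]
  apply (elim UnE)
  apply (clarify, rule P_KK)
  apply (clarify, rule P_JJ)
  apply (elim insertE emptyE; hypsubst; rule P_K0 P_J0)
  apply (clarify, rule P_Jsq)
  apply (clarify, rule P_JK)
  apply (clarify, rule P_JE)
  apply (clarify, rule P_JF)
  apply (clarify, rule P_KE)
  apply (clarify, rule P_KF)
  apply (clarify, rule P_EF)
  apply (clarify, rule P_SE, assumption)
  apply (clarify, rule P_SF, assumption)
  done

lemma PG: "eqv (Psi g (g a)) (gen a)"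
proof (cases a)
  case (GE i)
  have "Psi g (g a) = T i * (T i * Eg i)"
    using GE by (simp add: gpsi_def Psis scn)
  also have "\<dots> = T i * T i * Eg i" by (simp add: mult.assoc)
  also have "eqv \<dots> (1 * Eg i)" by (rule cg_multR, rule R_Jsq)
  finally show ?thesis using GE by simp
next
  case (GF i) then show ?thesis by (simp add: gpsi_def Psis)
next
  case (GK \<nu>)
  have "Psi g (g a) = Jg \<nu> * Jg \<nu> * Kg \<nu>"
    using GK by (simp add: gpsi_def Psis mult.assoc)
  also have "eqv \<dots> (1 * Kg \<nu>)" by (rule cg_multR, rule R_Jsq)
  finally show ?thesis using GK by simp
next
  case (GJ \<nu>) then show ?thesis by (simp add: gpsi_def Psis)
qed

end


theorem mainTheorem1:
  fixes dot :: "'i::finite \<Rightarrow> 'i \<Rightarrow> int" and par :: "'i \<Rightarrow> bool"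
    and yI :: "'i \<Rightarrow> 'r::finite \<Rightarrow> int" and xI :: "'i \<Rightarrow> 'r \<Rightarrow> int"
  assumes "super_cartan dot par" and "root_datum dot yI xI"
  defines "R \<equiv> qcg_ideal dot par yI xI"
  shows "\<exists>\<psi> :: ('i, 'r) falg \<Rightarrow> ('i, 'r) falg.
     (\<forall>x y. x - y \<in> R \<longrightarrow> \<psi> x - \<psi> y \<in> R) \<and>
     (\<forall>x y. \<psi> x - \<psi> y \<in> R \<longrightarrow> x - y \<in> R) \<and>
     (\<forall>y. \<exists>x. \<psi> x - y \<in> R) \<and>
     (\<forall>x y. \<psi> (x + y) - (\<psi> x + \<psi> y) \<in> R) \<and>
     (\<forall>x y. \<psi> (x * y) - \<psi> x * \<psi> y \<in> R) \<and>
     \<psi> 1 - 1 \<in> R \<and>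
     (\<forall>c x. \<psi> (sc c x) - sc (dag c) (\<psi> x) \<in> R) \<and>
     (\<forall>i. \<psi> (Eg i) - sc (ppw (dI dot i)) (Jg (ytil dot yI i) * Eg i) \<in> R) \<and>
     (\<forall>i. \<psi> (Fg i) - Fg i \<in> R) \<and>
     (\<forall>\<nu>. \<psi> (Kg \<nu>) - Jg \<nu> * Kg \<nu> \<in> R) \<and>
     (\<forall>\<nu>. \<psi> (Jg \<nu>) - Jg \<nu> \<in> R)"
proof -
  interpret Q: qcgctx dot par yI xI using assms(1,2) by unfold_locales
  let ?S = "qcg_rels dot par yI xI"
  let ?g = "gpsi dot yI"
  have R: "R = ideal_gen ?S" by (simp add: R_def qcg_ideal_def)
  have I: "\<And>x. x \<in> R \<Longrightarrow> Psi ?g x \<in> R" unfolding R by (rule Psi_ideal, rule Q.P_all)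
  have PP: "\<And>x. Psi ?g (Psi ?g x) - x \<in> R" unfolding R using Psi_Psi[of ?S ?g, OF Q.PG]
    by (simp add: cg_def)
  have z: "0 \<in> R" unfolding R by (rule ideal_gen.zero)
  show ?thesis
  proof (rule exI[of _ "Psi ?g"], intro conjI allI impI)
    fix x y assume "x - y \<in> R"
    then show "Psi ?g x - Psi ?g y \<in> R" using I by (simp add: Psi_diff[symmetric])
  next
    fix x y assume "Psi ?g x - Psi ?g y \<in> R"
    then have "Psi ?g (Psi ?g x) - Psi ?g (Psi ?g y) \<in> R" using I by (simp add: Psi_diff[symmetric])
    then have "cg ?S (Psi ?g (Psi ?g x)) (Psi ?g (Psi ?g y))" by (simp add: cg_def R)
    moreover have "cg ?S x (Psi ?g (Psi ?g x))" by (rule cg_sym) (use PP[of x] in \<open>simp add: cg_def R\<close>)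
    moreover have "cg ?S (Psi ?g (Psi ?g y)) y" using PP[of y] by (simp add: cg_def R)
    ultimately have "cg ?S x y" using cg_trans by blast
    then show "x - y \<in> R" by (simp add: cg_def R)
  next
    fix y show "\<exists>x. Psi ?g x - y \<in> R" using PP by blast
  qed (simp_all add: z Psi_add Psi_mult Psi_1 Psi_sc Q.Psi_E Q.Psi_F Q.Psi_K Q.Psi_J)
qed


end
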